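(* Let $S=\{s_1<\dots<s_{k_1}\}$ and $T=\{t_1<\dots<t_{k_2}\}$ be nonempty subsets of $\{1,\dots,n-1\}$ with $\max S+\min T\le n$ and $\min S+\max T\le n$, let $D$ be the digraph of $T_n\langle S;T\rangle$ and $d=\gcd\{s+t: s\in S,t\in T\}$. Let $\mathcal{I}_n=\{-n+1,\dots,n-1\}$ and for each positive integer $i$ define $P_i=\{\ell\in\mathcal{I}_n: \ell\equiv is_1\pmod d\}$; $Q_i=\{\sum_{j=1}^{k_1}a_js_j-\sum_{j=1}^{k_2}b_jt_j\in\mathcal{I}_n : a_j,b_j\in\mathbb{Z}_{\ge0},\ \sum_j a_j+\sum_j b_j=i\}$; $R_i$ = the set of $\ell\in\mathcal{I}_n$ such that for all vertices $u,v$ of $D$ with $v-u=\ell$ there is a directed $(u,v)$-walk of length $i$ in $D$. Then there is a positive integer $M$ such that $P_i=Q_i=R_i$ for every integer $i\ge M$.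
   Context: $T_n\langle S;T\rangle$ is the $n\times n$ $(0,1)$-matrix whose $(i,j)$-entry is $1$ iff $j-i\in S$ or $i-j\in T$; its digraph $D$ has vertex set $[n]$ and arc $(i,j)$ iff that entry is $1$. *)

theory Defs
  imports Main
begin

definition toep_arc :: "nat \<Rightarrow> int set \<Rightarrow> int set \<Rightarrow> int \<Rightarrow> int \<Rightarrow> bool" where
  "toep_arc n S T u v \<longleftrightarrow> u \<in> {1..int n} \<and> v \<in> {1..int n} \<and> (v - u \<in> S \<or> u - v \<in> T)"

definition has_walk :: "nat \<Rightarrow> int set \<Rightarrow> int set \<Rightarrow> nat \<Rightarrow> int \<Rightarrow> int \<Rightarrow> bool" where
  "has_walk n S T i u v \<longleftrightarrow>
     (\<exists>w :: nat \<Rightarrow> int. w 0 = u \<and> w i = v \<and> (\<forall>k<i. toep_arc n S T (w k) (w (Suc k))))"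

definition I_set :: "nat \<Rightarrow> int set" where
  "I_set n = {-int n + 1 .. int n - 1}"

definition d_gcd :: "int set \<Rightarrow> int set \<Rightarrow> int" where
  "d_gcd S T = Gcd {s + t | s t. s \<in> S \<and> t \<in> T}"

definition P_set :: "nat \<Rightarrow> int set \<Rightarrow> int set \<Rightarrow> nat \<Rightarrow> int set" where
  "P_set n S T i = {l \<in> I_set n. l mod d_gcd S T = (int i * Min S) mod d_gcd S T}"

definition Q_set :: "nat \<Rightarrow> int set \<Rightarrow> int set \<Rightarrow> nat \<Rightarrow> int set" where
  "Q_set n S T i = {l \<in> I_set n. \<exists>a b :: int \<Rightarrow> nat.
      l = (\<Sum>s\<in>S. int (a s) * s) - (\<Sum>t\<in>T. int (b t) * t) \<and>
      (\<Sum>s\<in>S. a s) + (\<Sum>t\<in>T. b t) = i}"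

definition R_set :: "nat \<Rightarrow> int set \<Rightarrow> int set \<Rightarrow> nat \<Rightarrow> int set" where
  "R_set n S T i = {l \<in> I_set n. \<forall>u v. u \<in> {1..int n} \<longrightarrow> v \<in> {1..int n} \<longrightarrow> v - u = l \<longrightarrow>
      has_walk n S T i u v}"

end

theory Submission
  imports Defs
begin


lemma has_walk_0: "has_walk n S T 0 u u"
  unfolding has_walk_def by (rule exI[of _ "\<lambda>_. u"]) simp

lemma has_walk_Cons:
  assumes "toep_arc n S T u x" "has_walk n S T j x v"
  shows "has_walk n S T (Suc j) u v"
proof -
  obtain w where w: "w 0 = x" "w j = v" "\<forall>k<j. toep_arc n S T (w k) (w (Suc k))"
    using assms(2) unfolding has_walk_def by blast
  define w' where "w' k = (if k = 0 then u else w (k - 1))" for k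
  have "\<forall>k<Suc j. toep_arc n S T (w' k) (w' (Suc k))"
  proof (intro allI impI)
    fix k assume "k < Suc j"
    show "toep_arc n S T (w' k) (w' (Suc k))"
    proof (cases k)
      case 0 then show ?thesis using assms(1) w by (simp add: w'_def)
    next
      case (Suc m) then show ?thesis using w \<open>k < Suc j\<close> by (simp add: w'_def)
    qed
  qed
  moreover have "w' 0 = u" "w' (Suc j) = v" using w by (auto simp: w'_def)
  ultimately show ?thesis unfolding has_walk_def by blast
qed

lemma has_walk_append:
  assumes "has_walk n S T i u x" "has_walk n S T j x v"
  shows "has_walk n S T (i + j) u v"
  using assms(1)
proof (induction i arbitrary: u)
  case 0
  then have "u = x" unfolding has_walk_def by auto
  then show ?case using assms(2) by simp
next
  case (Suc i)
  then obtain w where w: "w 0 = u" "w (Suc i) = x" "\<forall>k<Suc i. toep_arc n S T (w k) (w (Suc k))"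
    unfolding has_walk_def by blast
  have "has_walk n S T i (w 1) x"
    unfolding has_walk_def using w by (intro exI[of _ "\<lambda>k. w (Suc k)"]) auto
  then have "has_walk n S T (i + j) (w 1) v" using Suc.IH by blast
  moreover have "toep_arc n S T u (w 1)" using w by fastforce
  ultimately show ?case using has_walk_Cons by fastforce
qed

lemma has_walk_snoc_inv:
  assumes "has_walk n S T (Suc i) u v"
  shows "\<exists>x. has_walk n S T i u x \<and> toep_arc n S T x v"
proof -
  obtain w where w: "w 0 = u" "w (Suc i) = v" "\<forall>k<Suc i. toep_arc n S T (w k) (w (Suc k))"
    using assms unfolding has_walk_def by blast
  have "has_walk n S T i u (w i)" unfolding has_walk_def using w by (intro exI[of _ w]) auto
  moreover have "toep_arc n S T (w i) v" using w by auto
  ultimately show ?thesis by blast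
qed

lemma sum_upd_nat:
  assumes "finite A" "p \<in> A"
  shows "(\<Sum>x\<in>A. (f(p := c)) x) + f p = (\<Sum>x\<in>A. f x) + (c::nat)"
proof -
  have e: "(\<Sum>x\<in>A - {p}. (f(p := c)) x) = (\<Sum>x\<in>A - {p}. f x)"
    by (rule sum.cong) auto
  show ?thesis using sum.remove[OF assms, of "f(p:=c)"] sum.remove[OF assms, of f] e by simp
qed

lemma sum_upd_int:
  assumes "finite A" "p \<in> A"
  shows "(\<Sum>x\<in>A. int ((f(p := c)) x) * x) + int (f p) * p = (\<Sum>x\<in>A. int (f x) * x) + int c * p"
proof -
  have e: "(\<Sum>x\<in>A - {p}. int ((f(p := c)) x) * x) = (\<Sum>x\<in>A - {p}. int (f x) * x)"
    by (rule sum.cong) auto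
  show ?thesis using sum.remove[OF assms, of "\<lambda>x. int ((f(p:=c)) x) * x"]
      sum.remove[OF assms, of "\<lambda>x. int (f x) * x"] e by simp
qed

lemma walk_rep:
  assumes "finite S" "finite T"
  shows "has_walk n S T i u v \<Longrightarrow> \<exists>a b :: int \<Rightarrow> nat.
      v - u = (\<Sum>s\<in>S. int (a s) * s) - (\<Sum>t\<in>T. int (b t) * t) \<and>
      (\<Sum>s\<in>S. a s) + (\<Sum>t\<in>T. b t) = i"
proof (induction i arbitrary: v)
  case 0
  then have "v = u" unfolding has_walk_def by auto
  then show ?case by (intro exI[of _ "\<lambda>_. 0"]) simp
next
  case (Suc i)
  obtain x where x: "has_walk n S T i u x" "toep_arc n S T x v" using has_walk_snoc_inv[OF Suc.prems] by blast
  obtain a b where ab: "x - u = (\<Sum>s\<in>S. int (a s) * s) - (\<Sum>t\<in>T. int (b t) * t)"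
      "(\<Sum>s\<in>S. a s) + (\<Sum>t\<in>T. b t) = i" using Suc.IH[OF x(1)] by blast
  from x(2) have "v - x \<in> S \<or> x - v \<in> T" unfolding toep_arc_def by auto
  then show ?case
  proof
    assume p: "v - x \<in> S"
    define a' where "a' = a(v - x := a (v - x) + 1)"
    have "(\<Sum>s\<in>S. a' s) + a (v - x) = (\<Sum>s\<in>S. a s) + (a (v - x) + 1)"
      unfolding a'_def by (rule sum_upd_nat[OF assms(1) p])
    moreover have "(\<Sum>s\<in>S. int (a' s) * s) + int (a (v - x)) * (v - x) = (\<Sum>s\<in>S. int (a s) * s) + int (a (v - x) + 1) * (v - x)"
      unfolding a'_def by (rule sum_upd_int[OF assms(1) p])
    ultimately show ?thesis using ab by (intro exI[of _ a'] exI[of _ b]) (simp add: algebra_simps)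
  next
    assume q: "x - v \<in> T"
    define b' where "b' = b(x - v := b (x - v) + 1)"
    have "(\<Sum>s\<in>T. b' s) + b (x - v) = (\<Sum>s\<in>T. b s) + (b (x - v) + 1)"
      unfolding b'_def by (rule sum_upd_nat[OF assms(2) q])
    moreover have "(\<Sum>s\<in>T. int (b' s) * s) + int (b (x - v)) * (x - v) = (\<Sum>s\<in>T. int (b s) * s) + int (b (x - v) + 1) * (x - v)"
      unfolding b'_def by (rule sum_upd_int[OF assms(2) q])
    ultimately show ?thesis using ab by (intro exI[of _ a] exI[of _ b']) (simp add: algebra_simps)
  qed
qed


lemma greedy:
  assumes finS: "finite S" and finT: "finite T"
    and Spos: "\<forall>s\<in>S. s \<ge> 1" and Tpos: "\<forall>t\<in>T. t \<ge> 1"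
  shows "\<And>a b u v. (\<Sum>s\<in>S. a s) + (\<Sum>t\<in>T. b t) = N \<Longrightarrow>
     (\<forall>s\<in>S. \<forall>t\<in>T. a s > 0 \<longrightarrow> b t > 0 \<longrightarrow> s + t \<le> int n) \<Longrightarrow>
     u \<in> {1..int n} \<Longrightarrow> v \<in> {1..int n} \<Longrightarrow>
     v = u + (\<Sum>s\<in>S. int (a s) * s) - (\<Sum>t\<in>T. int (b t) * t) \<Longrightarrow>
     has_walk n S T N u v"
proof (induction N)
  case 0
  then have "\<forall>s\<in>S. a s = 0" "\<forall>t\<in>T. b t = 0" using finS finT by auto
  then have "v = u" using 0 by simp
  then show ?case by (simp add: has_walk_0)
next
  case (Suc N)
  note IH = Suc.IH
  show ?case
  proof (cases "\<exists>p\<in>S. a p > 0 \<and> u + p \<le> int n")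
    case True
    then obtain p where p: "p \<in> S" "a p > 0" "u + p \<le> int n" by blast
    define a' where "a' = a(p := a p - 1)"
    have s1: "(\<Sum>s\<in>S. a' s) + a p = (\<Sum>s\<in>S. a s) + (a p - 1)"
      unfolding a'_def by (rule sum_upd_nat[OF finS p(1)])
    have s2: "(\<Sum>s\<in>S. int (a' s) * s) + int (a p) * p = (\<Sum>s\<in>S. int (a s) * s) + int (a p - 1) * p"
      unfolding a'_def by (rule sum_upd_int[OF finS p(1)])
    have "has_walk n S T N (u + p) v"
    proof (rule IH[of a' b])
      show "sum a' S + sum b T = N" using s1 Suc.prems(1) p(2) by simp
      show "\<forall>s\<in>S. \<forall>t\<in>T. 0 < a' s \<longrightarrow> 0 < b t \<longrightarrow> s + t \<le> int n"
        using Suc.prems(2) by (auto simp: a'_def split: if_splits)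
      show "u + p \<in> {1..int n}" using p Spos Suc.prems(3) by force
      show "v \<in> {1..int n}" using Suc.prems(4) .
      show "v = u + p + (\<Sum>s\<in>S. int (a' s) * s) - (\<Sum>t\<in>T. int (b t) * t)"
        using s2 Suc.prems(5) p(2) by (simp add: of_nat_diff algebra_simps)
    qed
    moreover have "toep_arc n S T u (u + p)"
      unfolding toep_arc_def using p Spos Suc.prems(3) by force
    ultimately show ?thesis using has_walk_Cons by blast
  next
    case False1: False
    show ?thesis
    proof (cases "\<exists>q\<in>T. b q > 0 \<and> u - q \<ge> 1")
      case True
      then obtain q where q: "q \<in> T" "b q > 0" "u - q \<ge> 1" by blast
      define b' where "b' = b(q := b q - 1)"
      have s1: "(\<Sum>s\<in>T. b' s) + b q = (\<Sum>s\<in>T. b s) + (b q - 1)"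
        unfolding b'_def by (rule sum_upd_nat[OF finT q(1)])
      have s2: "(\<Sum>s\<in>T. int (b' s) * s) + int (b q) * q = (\<Sum>s\<in>T. int (b s) * s) + int (b q - 1) * q"
        unfolding b'_def by (rule sum_upd_int[OF finT q(1)])
      have "has_walk n S T N (u - q) v"
      proof (rule IH[of a b'])
        show "sum a S + sum b' T = N" using s1 Suc.prems(1) q(2) by simp
        show "\<forall>s\<in>S. \<forall>t\<in>T. 0 < a s \<longrightarrow> 0 < b' t \<longrightarrow> s + t \<le> int n"
          using Suc.prems(2) by (auto simp: b'_def split: if_splits)
        show "u - q \<in> {1..int n}" using q Tpos Suc.prems(3) by force
        show "v \<in> {1..int n}" using Suc.prems(4) .
        show "v = u - q + (\<Sum>s\<in>S. int (a s) * s) - (\<Sum>t\<in>T. int (b' t) * t)"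
          using s2 Suc.prems(5) q(2) by (simp add: of_nat_diff algebra_simps)
      qed
      moreover have "toep_arc n S T u (u - q)"
        unfolding toep_arc_def using q Tpos Suc.prems(3) by force
      ultimately show ?thesis using has_walk_Cons by blast
    next
      case False2: False
      have nnS: "(\<Sum>s\<in>S. int (a s) * s) \<ge> 0" using Spos by (intro sum_nonneg) auto
      have nnT: "(\<Sum>t\<in>T. int (b t) * t) \<ge> 0" using Tpos by (intro sum_nonneg) auto
      have "False"
      proof (cases "\<exists>p\<in>S. a p > 0")
        case True
        then obtain p where p: "p \<in> S" "a p > 0" by blast
        have up: "u + p > int n" using False1 p by auto
        show False
        proof (cases "\<exists>q\<in>T. b q > 0")
          case True
          then obtain q where q: "q \<in> T" "b q > 0" by blast
          have "u - q < 1" using False2 q by auto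
          moreover have "p + q \<le> int n" using Suc.prems(2) p q by blast
          ultimately show False using up by linarith
        next
          case False
          then have "(\<Sum>t\<in>T. int (b t) * t) = 0" by (intro sum.neutral) auto
          moreover have "int (a p) * p \<le> (\<Sum>s\<in>S. int (a s) * s)"
            using Spos p by (intro member_le_sum[OF p(1) _ finS, of "\<lambda>s. int (a s) * s"]) auto
          moreover have "p \<le> int (a p) * p"
          proof -
            have "1 \<le> int (a p)" "0 \<le> p" using p Spos by auto
            then show ?thesis using mult_right_mono[of 1 "int (a p)" p] by simp
          qed
          ultimately show False using Suc.prems(4,5) up by auto
        qed
      next
        case False
        then have z: "(\<Sum>s\<in>S. int (a s) * s) = 0" by (intro sum.neutral) auto
        have "sum a S = 0" using False by (intro sum.neutral) auto
        then have "sum b T \<noteq> 0" using Suc.prems(1) by simp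
        then obtain q where q: "q \<in> T" "b q > 0"
          by (metis sum.neutral neq0_conv)
        have "u - q < 1" using False2 q by auto
        moreover have "int (b q) * q \<le> (\<Sum>t\<in>T. int (b t) * t)"
          using Tpos q by (intro member_le_sum[OF q(1) _ finT, of "\<lambda>s. int (b s) * s"]) auto
        moreover have "q \<le> int (b q) * q"
        proof -
          have "1 \<le> int (b q)" "0 \<le> q" using q Tpos by auto
          then show ?thesis using mult_right_mono[of 1 "int (b q)" q] by simp
        qed
        ultimately show False using Suc.prems(3,4,5) z by auto
      qed
      then show ?thesis ..
    qed
  qed
qed

lemma frob:
  fixes f :: "'a \<Rightarrow> int"
  assumes "finite A"
  shows "A \<noteq> {} \<Longrightarrow> (\<forall>x\<in>A. f x > 0) \<Longrightarrow> \<exists>N0. \<forall>m\<ge>N0. Gcd (f ` A) dvd m \<longrightarrow>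
           (\<exists>c::'a \<Rightarrow> nat. m = (\<Sum>x\<in>A. int (c x) * f x))"
  using assms
proof (induction A rule: finite_induct)
  case empty then show ?case by simp
next
  case (insert y A)
  show ?case
  proof (cases "A = {}")
    case True
    show ?thesis
    proof (intro exI[of _ 0] allI impI)
      fix m :: int assume m: "m \<ge> 0" "Gcd (f ` insert y A) dvd m"
      have fy: "f y > 0" using insert by auto
      then have "f y dvd m" using m True by simp
      then obtain k where k: "m = f y * k" by blast
      have "k \<ge> 0" using k m fy by (simp add: zero_le_mult_iff)
      then show "\<exists>c. m = (\<Sum>x\<in>insert y A. int (c x) * f x)"
        using True k by (intro exI[of _ "\<lambda>_. nat k"]) simp
    qed
  next
    case False
    have fy: "f y > 0" using insert by auto
    obtain N0 where N0: "\<forall>m\<ge>N0. Gcd (f ` A) dvd m \<longrightarrow> (\<exists>c. m = (\<Sum>x\<in>A. int (c x) * f x))"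
      using insert False by auto
    define g where "g = Gcd (f ` A)"
    have gpos: "g > 0"
    proof -
      obtain z where "z \<in> A" using False by blast
      then have "g dvd f z" "f z > 0" unfolding g_def using insert by auto
      moreover have "g \<ge> 0" unfolding g_def by simp
      ultimately show ?thesis by (metis dvd_0_left less_le)
    qed
    show ?thesis
    proof (intro exI[of _ "N0 + g * f y"] allI impI)
      fix m assume m: "m \<ge> N0 + g * f y" "Gcd (f ` insert y A) dvd m"
      have gg: "Gcd (f ` insert y A) = gcd (f y) g" unfolding g_def by simp
      obtain p q where pq: "p * f y + q * g = gcd (f y) g" using bezout_int by blast
      obtain r where r: "m = gcd (f y) g * r" using m(2) gg by (metis dvd_def)
      define k where "k = (r * p) mod g"
      have k0: "0 \<le> k" "k < g" unfolding k_def using gpos by auto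
      have "g dvd (m - k * f y)"
      proof -
        have "m = r * (p * f y + q * g)" using r pq by simp
        then have "m - (r * p) * f y = r * q * g" by (simp add: algebra_simps)
        moreover have "g dvd (r * p - k)" unfolding k_def by (simp add: mod_eq_dvd_iff minus_mod_eq_mult_div [symmetric])
        then have "g dvd (r * p - k) * f y" by simp
        ultimately have "g dvd (m - (r*p) * f y) + (r * p - k) * f y" by simp
        then show ?thesis by (simp add: algebra_simps)
      qed
      moreover have "m - k * f y \<ge> N0"
      proof -
        have "k * f y \<le> g * f y" using k0 fy by simp
        then show ?thesis using m by linarith
      qed
      ultimately obtain c where c: "m - k * f y = (\<Sum>x\<in>A. int (c x) * f x)" using N0 unfolding g_def by blast
      define c' where "c' = c(y := nat k)"
      have "(\<Sum>x\<in>A. int (c' x) * f x) = (\<Sum>x\<in>A. int (c x) * f x)"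
        using insert(2) by (intro sum.cong) (auto simp: c'_def)
      then have "m = (\<Sum>x\<in>insert y A. int (c' x) * f x)"
        using c insert(1,2) k0 by (simp add: c'_def)
      then show "\<exists>c. m = (\<Sum>x\<in>insert y A. int (c x) * f x)" by blast
    qed
  qed
qed


lemma A_rep:
  fixes S :: "int set" and t1 s1 :: int and n :: nat
  assumes finS: "finite S" and ne: "S \<noteq> {}" and Spos: "\<forall>s\<in>S. s \<ge> 1" and t1: "t1 \<ge> 1" and s1: "s1 \<in> S"
  shows "\<exists>MA::nat. \<forall>j::nat. \<forall>x. j \<ge> MA \<longrightarrow> \<bar>x\<bar> \<le> int n \<longrightarrow> Gcd ((\<lambda>s. s + t1) ` S) dvd (x - int j * s1) \<longrightarrow>
     (\<exists>a::int\<Rightarrow>nat. \<exists>c::nat. x = (\<Sum>s\<in>S. int (a s) * s) - int c * t1 \<and> (\<Sum>s\<in>S. a s) + c = j)"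
proof -
  obtain F where F: "\<forall>m\<ge>F. Gcd ((\<lambda>s. s + t1) ` S) dvd m \<longrightarrow> (\<exists>c::int \<Rightarrow> nat. m = (\<Sum>x\<in>S. int (c x) * (x + t1)))"
  proof -
    have "\<forall>x\<in>S. (\<lambda>s. s + t1) x > 0" using Spos t1 by auto
    from frob[OF finS ne this] show ?thesis using that by blast
  qed
  show ?thesis
  proof (intro exI[of _ "nat F + n"] allI impI)
    fix j :: nat and x :: int
    assume j: "nat F + n \<le> j" and x: "\<bar>x\<bar> \<le> int n" and dv: "Gcd ((\<lambda>s. s + t1) ` S) dvd (x - int j * s1)"
    define m where "m = x + int j * t1"
    have "Gcd ((\<lambda>s. s + t1) ` S) dvd (s1 + t1)" using s1 by (intro Gcd_dvd) auto
    then have "Gcd ((\<lambda>s. s + t1) ` S) dvd (x - int j * s1) + int j * (s1 + t1)" using dv by simp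
    then have dm: "Gcd ((\<lambda>s. s + t1) ` S) dvd m" unfolding m_def by (simp add: algebra_simps)
    have jt: "int j \<le> int j * t1" using mult_left_mono[of 1 t1 "int j"] t1 by simp
    have "m \<ge> F" unfolding m_def using j x jt by linarith
    then obtain c where c: "m = (\<Sum>s\<in>S. int (c s) * (s + t1))" using F dm by blast
    define C where "C = (\<Sum>s\<in>S. c s)"
    have e1: "(\<Sum>s\<in>S. int (c s) * (s + t1)) = (\<Sum>s\<in>S. int (c s) * s) + int C * t1"
      unfolding C_def by (simp add: algebra_simps sum.distrib sum_distrib_right sum_distrib_left)
    have "(\<Sum>s\<in>S. int (c s) * (1 + t1)) \<le> (\<Sum>s\<in>S. int (c s) * (s + t1))"
      using Spos by (intro sum_mono mult_left_mono) auto
    then have "int C * (1 + t1) \<le> m" using c unfolding C_def by (simp add: sum_distrib_right)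
    also have "m \<le> int j * (1 + t1)" unfolding m_def using j x by (simp add: algebra_simps)
    finally have "int C * (1 + t1) \<le> int j * (1 + t1)" .
    then have "C \<le> j" using t1 by (metis mult_le_cancel_right not_le add_pos_pos zero_less_one order_less_le_trans of_nat_le_iff t1 less_le_not_le)
    show "\<exists>a c. x = (\<Sum>s\<in>S. int (a s) * s) - int c * t1 \<and> sum a S + c = j"
    proof (intro exI[of _ c] exI[of _ "j - C"] conjI)
      show "x = (\<Sum>s\<in>S. int (c s) * s) - int (j - C) * t1"
        using c e1 \<open>C \<le> j\<close> unfolding m_def by (simp add: of_nat_diff algebra_simps)
      show "sum c S + (j - C) = j" using \<open>C \<le> j\<close> unfolding C_def by simp
    qed
  qed
qed

lemma B_rep:
  fixes T :: "int set" and s1 :: int and n :: nat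
  assumes finT: "finite T" and ne: "T \<noteq> {}" and Tpos: "\<forall>t\<in>T. t \<ge> 1" and s1: "s1 \<ge> 1"
  shows "\<exists>MB::nat. \<forall>j::nat. \<forall>x. j \<ge> MB \<longrightarrow> \<bar>x\<bar> \<le> int n \<longrightarrow> Gcd ((\<lambda>t. s1 + t) ` T) dvd (x - int j * s1) \<longrightarrow>
     (\<exists>b::int\<Rightarrow>nat. \<exists>c::nat. x = int c * s1 - (\<Sum>t\<in>T. int (b t) * t) \<and> c + (\<Sum>t\<in>T. b t) = j)"
proof -
  obtain F where F: "\<forall>m\<ge>F. Gcd ((\<lambda>t. s1 + t) ` T) dvd m \<longrightarrow> (\<exists>c::int \<Rightarrow> nat. m = (\<Sum>x\<in>T. int (c x) * (s1 + x)))"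
  proof -
    have "\<forall>x\<in>T. (\<lambda>t. s1 + t) x > 0" using Tpos s1 by auto
    from frob[OF finT ne this] show ?thesis using that by blast
  qed
  show ?thesis
  proof (intro exI[of _ "nat F + n"] allI impI)
    fix j :: nat and x :: int
    assume j: "nat F + n \<le> j" and x: "\<bar>x\<bar> \<le> int n" and dv: "Gcd ((\<lambda>t. s1 + t) ` T) dvd (x - int j * s1)"
    define m where "m = int j * s1 - x"
    have dm: "Gcd ((\<lambda>t. s1 + t) ` T) dvd m" unfolding m_def using dv
      by (metis dvd_minus_iff minus_diff_eq)
    have jt: "int j \<le> int j * s1" using mult_left_mono[of 1 s1 "int j"] s1 by simp
    have "m \<ge> F" unfolding m_def using j x jt by linarith
    then obtain c where c: "m = (\<Sum>t\<in>T. int (c t) * (s1 + t))" using F dm by blast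
    define C where "C = (\<Sum>t\<in>T. c t)"
    have e1: "(\<Sum>t\<in>T. int (c t) * (s1 + t)) = (\<Sum>t\<in>T. int (c t) * t) + int C * s1"
      unfolding C_def by (simp add: algebra_simps sum.distrib sum_distrib_right sum_distrib_left)
    have "(\<Sum>t\<in>T. int (c t) * (s1 + 1)) \<le> (\<Sum>t\<in>T. int (c t) * (s1 + t))"
      using Tpos by (intro sum_mono mult_left_mono) auto
    then have "int C * (s1 + 1) \<le> m" using c unfolding C_def by (simp add: sum_distrib_right)
    also have "m \<le> int j * (s1 + 1)" unfolding m_def using j x by (simp add: algebra_simps)
    finally have "int C * (s1 + 1) \<le> int j * (s1 + 1)" .
    then have "C \<le> j" using s1 by (metis mult_le_cancel_right not_le add_pos_pos zero_less_one order_less_le_trans of_nat_le_iff less_le_not_le)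
    show "\<exists>b c. x = int c * s1 - (\<Sum>t\<in>T. int (b t) * t) \<and> c + sum b T = j"
    proof (intro exI[of _ c] exI[of _ "j - C"] conjI)
      show "x = int (j - C) * s1 - (\<Sum>t\<in>T. int (c t) * t)"
        using c e1 \<open>C \<le> j\<close> unfolding m_def by (simp add: of_nat_diff algebra_simps)
      show "j - C + sum c T = j" using \<open>C \<le> j\<close> unfolding C_def by simp
    qed
  qed
qed


lemma Q_sub_P:
  assumes finS: "finite S" and finT: "finite T" and s1: "s1 \<in> S" and t1: "t1 \<in> T"
    and dd: "\<forall>s\<in>S. \<forall>t\<in>T. d dvd s + t"
    and l: "l = (\<Sum>s\<in>S. int (a s) * s) - (\<Sum>t\<in>T. int (b t) * t)"
    and i: "(\<Sum>s\<in>S. a s) + (\<Sum>t\<in>T. b t) = i"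
  shows "d dvd l - int i * s1"
proof -
  have ii: "int i = (\<Sum>s\<in>S. int (a s)) + (\<Sum>t\<in>T. int (b t))" using i by (simp flip: i)
  have "l - int i * s1 = (\<Sum>s\<in>S. int (a s) * (s - s1)) - (\<Sum>t\<in>T. int (b t) * (t + s1))"
    unfolding l ii by (simp add: algebra_simps sum.distrib sum_distrib_right sum_distrib_left sum_subtractf)
  moreover have "d dvd (\<Sum>s\<in>S. int (a s) * (s - s1))"
  proof (rule dvd_sum)
    fix s assume "s \<in> S"
    then have "d dvd (s + t1) - (s1 + t1)" using dd s1 t1 by (intro dvd_diff) auto
    then have "d dvd s - s1" by (simp add: algebra_simps)
    then show "d dvd int (a s) * (s - s1)" by (rule dvd_mult)
  qed
  moreover have "d dvd (\<Sum>t\<in>T. int (b t) * (t + s1))"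
  proof (rule dvd_sum)
    fix t assume "t \<in> T"
    then have "d dvd s1 + t" using dd s1 by auto
    then have "d dvd t + s1" by (simp add: add.commute)
    then show "d dvd int (b t) * (t + s1)" by (rule dvd_mult)
  qed
  ultimately show ?thesis by simp
qed

lemma P_sub_R:
  fixes n :: nat and S T :: "int set"
  assumes ne: "S \<noteq> {}" "T \<noteq> {}"
    and Sr: "S \<subseteq> {1..int n - 1}" and Tr: "T \<subseteq> {1..int n - 1}"
    and c1: "Max S + Min T \<le> int n" and c2: "Min S + Max T \<le> int n"
  shows "\<exists>M::nat. M > 0 \<and> (\<forall>i\<ge>M. P_set n S T i \<subseteq> R_set n S T i)"
proof -
  have finS: "finite S" using Sr finite_subset by blast
  have finT: "finite T" using Tr finite_subset by blast
  have Spos: "\<forall>s\<in>S. s \<ge> 1" and Sle: "\<forall>s\<in>S. s \<le> int n - 1" using Sr by auto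
  have Tpos: "\<forall>t\<in>T. t \<ge> 1" and Tle: "\<forall>t\<in>T. t \<le> int n - 1" using Tr by auto
  define s1 where "s1 = Min S"
  define t1 where "t1 = Min T"
  have s1S: "s1 \<in> S" unfolding s1_def using finS ne by simp
  have t1T: "t1 \<in> T" unfolding t1_def using finT ne by simp
  have s1p: "s1 \<ge> 1" "s1 \<le> int n - 1" using s1S Spos Sle by auto
  have t1p: "t1 \<ge> 1" using t1T Tpos by auto
  have cS: "\<forall>s\<in>S. s + t1 \<le> int n" using c1 finS unfolding t1_def by (meson Max_ge add_right_mono order_trans)
  have cT: "\<forall>t\<in>T. s1 + t \<le> int n" using c2 finT unfolding s1_def by (meson Max_ge add_left_mono order_trans)
  define g1 where "g1 = Gcd ((\<lambda>s. s + t1) ` S)"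
  define g2 where "g2 = Gcd ((\<lambda>t. s1 + t) ` T)"
  define d where "d = d_gcd S T"
  obtain MA where MA: "\<forall>j::nat. \<forall>x. j \<ge> MA \<longrightarrow> \<bar>x\<bar> \<le> int n \<longrightarrow> g1 dvd (x - int j * s1) \<longrightarrow>
     (\<exists>a::int\<Rightarrow>nat. \<exists>c::nat. x = (\<Sum>s\<in>S. int (a s) * s) - int c * t1 \<and> (\<Sum>s\<in>S. a s) + c = j)"
    using A_rep[OF finS ne(1) Spos t1p s1S, of n] unfolding g1_def by blast
  obtain MB where MB: "\<forall>j::nat. \<forall>x. j \<ge> MB \<longrightarrow> \<bar>x\<bar> \<le> int n \<longrightarrow> g2 dvd (x - int j * s1) \<longrightarrow>
     (\<exists>b::int\<Rightarrow>nat. \<exists>c::nat. x = int c * s1 - (\<Sum>t\<in>T. int (b t) * t) \<and> c + (\<Sum>t\<in>T. b t) = j)"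
    using B_rep[OF finT ne(2) Tpos s1p(1), of n] unfolding g2_def by blast
  have g1d: "g1 dvd s + t1" if "s \<in> S" for s unfolding g1_def using that by (intro Gcd_dvd) auto
  have g2d: "g2 dvd s1 + t" if "t \<in> T" for t unfolding g2_def using that by (intro Gcd_dvd) auto
  have g1pos: "g1 > 0"
  proof -
    have "g1 \<ge> 0" unfolding g1_def by simp
    moreover have "g1 \<noteq> 0" using g1d[OF s1S] s1p t1p by auto
    ultimately show ?thesis by simp
  qed
  have g2pos: "g2 > 0"
  proof -
    have "g2 \<ge> 0" unfolding g2_def by simp
    moreover have "g2 \<noteq> 0" using g2d[OF t1T] s1p t1p by auto
    ultimately show ?thesis by simp
  qed
  have gd: "gcd g1 g2 dvd d"
    unfolding d_def d_gcd_def
  proof (rule Gcd_greatest)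
    fix x assume "x \<in> {s + t |s t. s \<in> S \<and> t \<in> T}"
    then obtain s t where st: "s \<in> S" "t \<in> T" "x = s + t" by blast
    have "gcd g1 g2 dvd (s + t1) + (s1 + t) - (s1 + t1)"
      using g1d[OF st(1)] g2d[OF st(2)] g1d[OF s1S]
      by (meson dvd_add dvd_diff gcd_dvd1 gcd_dvd2 dvd_trans)
    then show "gcd g1 g2 dvd x" using st by (simp add: algebra_simps)
  qed
  define G where "G = g1 * g2"
  have Gpos: "G > 0" unfolding G_def using g1pos g2pos by simp
  define M0 where "M0 = max MA MB"
  define K0 where "K0 = int n + int M0 * s1 + 1"
  define J where "J = M0 + nat (K0 * G) + nat s1"
  define M where "M = J + M0 + 1"
  have nM0: "int n + int M0 * s1 \<ge> 0" using s1p by simp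
  have K0G2: "K0 * G \<ge> int n + int M0 * s1 + G"
  proof -
    have "(G - 1) * (int n + int M0 * s1) \<ge> 0" using Gpos nM0 by simp
    have "K0 * G = (int n + int M0 * s1) * G + G" unfolding K0_def by (simp add: algebra_simps)
    moreover have "(int n + int M0 * s1) * G \<ge> (int n + int M0 * s1) * 1"
      using Gpos nM0 by (intro mult_left_mono) auto
    ultimately show ?thesis by simp
  qed
  show ?thesis
  proof (intro exI[of _ M] conjI allI impI subsetI)
    show "M > 0" unfolding M_def by simp
    fix i l assume iM: "M \<le> i" and lP: "l \<in> P_set n S T i"
    then have lI: "l \<in> I_set n" and lmod: "l mod d = (int i * Min S) mod d"
      unfolding P_set_def d_def by auto
    have "d dvd l - int i * s1" using lmod unfolding s1_def by (simp add: mod_eq_dvd_iff)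
    then have "gcd g1 g2 dvd l - int i * s1" using gd dvd_trans by blast
    then obtain r where r: "l - int i * s1 = gcd g1 g2 * r" by blast
    obtain al be where ab: "al * g1 + be * g2 = gcd g1 g2" using bezout_int by blast
    define \<alpha> where "\<alpha> = r * al"
    define \<beta> where "\<beta> = r * be"
    have lab: "l - int i * s1 = \<alpha> * g1 + \<beta> * g2"
      unfolding \<alpha>_def \<beta>_def using r ab[symmetric] by (simp add: algebra_simps)
    show "l \<in> R_set n S T i"
      unfolding R_set_def
    proof (intro CollectI conjI allI impI lI)
      fix u v assume u: "u \<in> {1..int n}" and v: "v \<in> {1..int n}" and uv: "v - u = l"
      define c0 where "c0 = \<alpha> * g1"
      define c where "c = c0 mod G - K0 * G"
      define e where "e = 1 - u - (int M0 * s1 + c)"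
      have cm: "0 \<le> c0 mod G" "c0 mod G < G" using Gpos by auto
      have e0: "e \<ge> 0" unfolding e_def c_def using cm K0G2 u by simp
      have M0s: "int M0 * s1 \<ge> 0" using s1p by simp
      have eK: "e \<le> K0 * G" unfolding e_def c_def using cm u M0s by auto
      define q where "q = (e + s1 - 1) div s1"
      have qd: "e + s1 - 1 = q * s1 + (e + s1 - 1) mod s1" unfolding q_def by simp
      have qm: "0 \<le> (e + s1 - 1) mod s1" "(e + s1 - 1) mod s1 < s1" using s1p by auto
      have qs1: "e \<le> q * s1" "q * s1 \<le> e + s1 - 1" using qd qm by linarith+
      have q0: "q \<ge> 0" unfolding q_def using e0 s1p by (simp add: pos_imp_zdiv_nonneg_iff)
      have "q \<le> q * s1" using mult_left_mono[of 1 s1 q] q0 s1p by simp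
      then have qle: "q \<le> e + s1 - 1" using qs1 by linarith
      define j1 where "j1 = M0 + nat q"
      define x1 where "x1 = int j1 * s1 + c"
      have x1e: "x1 = 1 - u - e + q * s1" unfolding x1_def j1_def e_def using q0 by (simp add: algebra_simps)
      have x1r: "1 - u \<le> x1" "x1 \<le> s1 - u" using x1e qs1 by linarith+
      have j1J: "j1 \<le> J" unfolding j1_def J_def using qle eK q0 s1p by linarith
      define j2 where "j2 = i - j1"
      have j12: "j1 + j2 = i" unfolding j2_def using j1J iM unfolding M_def by simp
      have j2M: "j2 \<ge> M0" unfolding j2_def using j1J iM unfolding M_def by simp
      define x2 where "x2 = l - x1"
      have dvc: "g1 dvd c"
      proof -
        have "c0 mod G = c0 - G * (c0 div G)" by (simp add: minus_div_mult_eq_mod [symmetric] algebra_simps)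
        then have "c = g1 * (\<alpha> - g2 * (c0 div G) - g2 * K0)"
          unfolding c_def c0_def G_def by (simp add: algebra_simps)
        then show ?thesis by simp
      qed
      have dvc2: "g2 dvd (l - int i * s1) - c"
      proof -
        have "c0 mod G = c0 - G * (c0 div G)" by (simp add: minus_div_mult_eq_mod [symmetric] algebra_simps)
        then have "(l - int i * s1) - c = g2 * (\<beta> + g1 * (c0 div G) + g1 * K0)"
          unfolding c_def c0_def G_def lab by (simp add: algebra_simps)
        then show ?thesis by simp
      qed
      have A1: "g1 dvd (x1 - int j1 * s1)" unfolding x1_def using dvc by simp
      have B1: "g2 dvd (x2 - int j2 * s1)"
      proof -
        have "int j2 = int i - int j1" unfolding j2_def using j1J iM unfolding M_def by simp
        then have "int j2 * s1 = int i * s1 - int j1 * s1" by (simp add: left_diff_distrib)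
        then have "x2 - int j2 * s1 = (l - int i * s1) - c" unfolding x2_def x1_def by (simp add: algebra_simps)
        then show ?thesis using dvc2 by simp
      qed
      have x1b: "\<bar>x1\<bar> \<le> int n" using x1r u s1p by (simp add: abs_le_iff)
      have w1: "u + x1 \<in> {1..int n}" using x1r s1p by simp
      have x2v: "x2 = v - (u + x1)" unfolding x2_def using uv by simp
      have x2b: "\<bar>x2\<bar> \<le> int n" using x2v w1 v by (simp add: abs_le_iff)
      obtain a cA where aA: "x1 = (\<Sum>s\<in>S. int (a s) * s) - int cA * t1" "(\<Sum>s\<in>S. a s) + cA = j1"
        using MA j1J A1 x1b unfolding j1_def M0_def by (meson le_add1 max.bounded_iff order_trans)
      obtain b cB where bB: "x2 = int cB * s1 - (\<Sum>t\<in>T. int (b t) * t)" "cB + (\<Sum>t\<in>T. b t) = j2"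
        using MB j2M B1 x2b unfolding M0_def by (meson max.bounded_iff)
      define bA where "bA = (\<lambda>t. if t = t1 then cA else 0)"
      define aB where "aB = (\<lambda>s. if s = s1 then cB else 0)"
      have sbA: "(\<Sum>t\<in>T. bA t) = cA" unfolding bA_def using finT t1T by simp
      have sbA2: "(\<Sum>t\<in>T. int (bA t) * t) = int cA * t1"
      proof -
        have "(\<Sum>t\<in>T. int (bA t) * t) = (\<Sum>t\<in>T. if t = t1 then int cA * t1 else 0)"
          unfolding bA_def by (intro sum.cong) auto
        then show ?thesis using finT t1T by simp
      qed
      have saB: "(\<Sum>s\<in>S. aB s) = cB" unfolding aB_def using finS s1S by simp
      have saB2: "(\<Sum>s\<in>S. int (aB s) * s) = int cB * s1"
      proof -
        have "(\<Sum>s\<in>S. int (aB s) * s) = (\<Sum>s\<in>S. if s = s1 then int cB * s1 else 0)"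
          unfolding aB_def by (intro sum.cong) auto
        then show ?thesis using finS s1S by simp
      qed
      have W1: "has_walk n S T j1 u (u + x1)"
      proof (rule greedy[OF finS finT Spos Tpos])
        show "sum a S + sum bA T = j1" using sbA aA by simp
        show "\<forall>s\<in>S. \<forall>t\<in>T. 0 < a s \<longrightarrow> 0 < bA t \<longrightarrow> s + t \<le> int n"
          using cS unfolding bA_def by (auto split: if_splits)
        show "u \<in> {1..int n}" using u .
        show "u + x1 \<in> {1..int n}" using w1 .
        show "u + x1 = u + (\<Sum>s\<in>S. int (a s) * s) - (\<Sum>t\<in>T. int (bA t) * t)"
          using sbA2 aA by simp
      qed
      have W2: "has_walk n S T j2 (u + x1) v"
      proof (rule greedy[OF finS finT Spos Tpos])
        show "sum aB S + sum b T = j2" using saB bB by simp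
        show "\<forall>s\<in>S. \<forall>t\<in>T. 0 < aB s \<longrightarrow> 0 < b t \<longrightarrow> s + t \<le> int n"
          using cT unfolding aB_def by (auto split: if_splits)
        show "u + x1 \<in> {1..int n}" using w1 .
        show "v \<in> {1..int n}" using v .
        show "v = u + x1 + (\<Sum>s\<in>S. int (aB s) * s) - (\<Sum>t\<in>T. int (b t) * t)"
          using saB2 bB x2v by simp
      qed
      show "has_walk n S T i u v" using has_walk_append[OF W1 W2] j12 by simp
    qed
  qed
qed

theorem theorem2p9:
  fixes n :: nat and S T :: "int set"
  assumes "S \<noteq> {}" and "T \<noteq> {}"
    and "S \<subseteq> {1..int n - 1}" and "T \<subseteq> {1..int n - 1}"
    and "Max S + Min T \<le> int n" and "Min S + Max T \<le> int n"
  shows "\<exists>M::nat. M > 0 \<and> (\<forall>i\<ge>M. P_set n S T i = Q_set n S T i \<and> Q_set n S T i = R_set n S T i)"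
proof -
  obtain M where M: "M > 0" "\<forall>i\<ge>M. P_set n S T i \<subseteq> R_set n S T i"
    using P_sub_R[OF assms] by blast
  have finS: "finite S" using assms(3) finite_subset by blast
  have finT: "finite T" using assms(4) finite_subset by blast
  have s1S: "Min S \<in> S" using finS assms(1) by simp
  have t1T: "Min T \<in> T" using finT assms(2) by simp
  have dd: "\<forall>s\<in>S. \<forall>t\<in>T. d_gcd S T dvd s + t" unfolding d_gcd_def by (auto intro: Gcd_dvd)
  have RQ: "R_set n S T i \<subseteq> Q_set n S T i" for i
  proof
    fix l assume l: "l \<in> R_set n S T i"
    then have lI: "l \<in> I_set n" unfolding R_set_def by auto
    define u where "u = (if l \<ge> 0 then 1 else 1 - l)"
    have u: "u \<in> {1..int n}" "u + l \<in> {1..int n}" using lI unfolding u_def I_set_def by auto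
    then have "has_walk n S T i u (u + l)" using l unfolding R_set_def by auto
    from walk_rep[OF finS finT this] show "l \<in> Q_set n S T i" using lI unfolding Q_set_def by auto
  qed
  have QP: "Q_set n S T i \<subseteq> P_set n S T i" for i
  proof
    fix l assume l: "l \<in> Q_set n S T i"
    then obtain a b where ab: "l = (\<Sum>s\<in>S. int (a s) * s) - (\<Sum>t\<in>T. int (b t) * t)"
        "(\<Sum>s\<in>S. a s) + (\<Sum>t\<in>T. b t) = i" and lI: "l \<in> I_set n" unfolding Q_set_def by auto
    have "d_gcd S T dvd l - int i * Min S" by (rule Q_sub_P[OF finS finT s1S t1T dd ab])
    then show "l \<in> P_set n S T i" using lI unfolding P_set_def by (simp add: mod_eq_dvd_iff)
  qed
  show ?thesis
  proof (intro exI[of _ M] conjI allI impI)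
    show "M > 0" by (rule M(1))
    fix i assume "M \<le> i"
    then have "P_set n S T i \<subseteq> R_set n S T i" using M(2) by blast
    then show "P_set n S T i = Q_set n S T i" "Q_set n S T i = R_set n S T i"
      using RQ[of i] QP[of i] by blast+
  qed
qed

end
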